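(* Let $\mathscr{A}$ be a $C^*$-algebra with identity such that the set $\mathscr{A}'_m$ of all linear multiplicative functionals $\varphi\colon\mathscr{A}\to\mathbb{C}$ is total (i.e., if $\varphi(a)=0$ for all $\varphi\in\mathscr{A}'_m$ then $a=0$). Let $\mathscr{X}$ be a right $\mathscr{A}$-module which is also a normed space. Let $E, F\colon \mathscr{X}^2\to\mathscr{A}$ be multi-$\mathscr{A}$-linear functions, and assume that $E$ is bounded and strong. Then the following are equivalent: (i) for all $x,y\in\mathscr{X}$, $E(x,y)=0$ implies $F(x,y)=0$; (ii) there exists $c\in\mathscr{A}$ such that $F(x,y)=cE(x,y)$ for all $x,y\in\mathscr{X}$. Moreover, each of these conditions implies that $F$ is bounded.
   Context: A right $\mathscr{A}$-module $\mathscr{X}$ is a complex vector space with a right $\mathscr{A}$-action satisfying $(\alpha x)a=x(\alpha a)=\alpha(xa)$. A function $F\colon\mathscr{X}^n\to\mathscr{A}$ is multi-$\mathscr{A}$-linear if for all $x_1,\dots,x_n,y_j\in\mathscr{X}$, $\alpha\in\mathbb{C}$, $a\in\mathscr{A}$ and $j=1,\dots,n$: (A) $F$ is additive in the $j$-th variable; (B) $F(x_1,\dots,\alpha x_j a,\dots,x_n)=\alpha F(x_1,\dots,x_n)a$ if $j$ is even; (C) $F(x_1,\dots,\alpha x_j a,\dots,x_n)=\overline{\alpha}a^*F(x_1,\dots,x_n)$ if $j$ is odd. $F$ is bounded if there is $M$ with $\|F(x_1,\dots,x_n)\|\le M\|x_1\|\cdots\|x_n\|$ for all $x_i$. With $G_{\mathscr{A}}$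 the set of invertible elements of $\mathscr{A}$, $F$ is strong if there exists $w\in\mathscr{X}$ with $F(w,w,\dots,w)\in G_{\mathscr{A}}$. *)

theory Defs
  imports "HOL-Analysis.Analysis"
begin

class cvector = real_vector +
  fixes scaleC :: "complex \<Rightarrow> 'a \<Rightarrow> 'a"
  assumes scaleC_add_right: "scaleC \<alpha> (x + y) = scaleC \<alpha> x + scaleC \<alpha> y"
    and scaleC_add_left: "scaleC (\<alpha> + \<beta>) x = scaleC \<alpha> x + scaleC \<beta> x"
    and scaleC_scaleC: "scaleC \<alpha> (scaleC \<beta> x) = scaleC (\<alpha> * \<beta>) x"
    and scaleC_one: "scaleC 1 x = x"
    and scaleR_scaleC: "scaleR r x = scaleC (complex_of_real r) x"

class cnormed_vector = cvector + real_normed_vector +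
  assumes norm_scaleC: "norm (scaleC \<alpha> x) = cmod \<alpha> * norm x"

class cstar_algebra_1 = cnormed_vector + real_normed_algebra_1 + banach +
  fixes cstar :: "'a \<Rightarrow> 'a"
  assumes scaleC_mult_left: "scaleC \<alpha> (x * y) = scaleC \<alpha> x * y"
    and scaleC_mult_right: "scaleC \<alpha> (x * y) = x * scaleC \<alpha> y"
    and cstar_cstar: "cstar (cstar x) = x"
    and cstar_add: "cstar (x + y) = cstar x + cstar y"
    and cstar_scaleC: "cstar (scaleC \<alpha> x) = scaleC (cnj \<alpha>) (cstar x)"
    and cstar_mult: "cstar (x * y) = cstar y * cstar x"
    and cstar_identity: "norm (cstar x * x) = (norm x)\<^sup>2"

definition mult_functional :: "('a::cstar_algebra_1 \<Rightarrow> complex) \<Rightarrow> bool" where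
  "mult_functional \<phi> \<longleftrightarrow>
     (\<forall>a b. \<phi> (a + b) = \<phi> a + \<phi> b) \<and>
     (\<forall>\<alpha> a. \<phi> (scaleC \<alpha> a) = \<alpha> * \<phi> a) \<and>
     (\<forall>a b. \<phi> (a * b) = \<phi> a * \<phi> b)"

definition mult_functionals_total :: "'a::cstar_algebra_1 itself \<Rightarrow> bool" where
  "mult_functionals_total _ \<longleftrightarrow>
     (\<forall>a::'a. (\<forall>\<phi>. mult_functional \<phi> \<longrightarrow> \<phi> a = 0) \<longrightarrow> a = 0)"

definition right_module ::
  "('x::cvector \<Rightarrow> 'a::cstar_algebra_1 \<Rightarrow> 'x) \<Rightarrow> bool" where
  "right_module act \<longleftrightarrow>
     (\<forall>x y a. act (x + y) a = act x a + act y a) \<and>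
     (\<forall>x a b. act x (a + b) = act x a + act x b) \<and>
     (\<forall>x a b. act x (a * b) = act (act x a) b) \<and>
     (\<forall>\<alpha> x a. act (scaleC \<alpha> x) a = act x (scaleC \<alpha> a) \<and>
               act x (scaleC \<alpha> a) = scaleC \<alpha> (act x a))"

text \<open>Multi-A-linear functions of two variables (n = 2): variable 1 is odd, variable 2 even.\<close>
definition multi_A_linear2 ::
  "('x::cvector \<Rightarrow> 'a::cstar_algebra_1 \<Rightarrow> 'x) \<Rightarrow> ('x \<Rightarrow> 'x \<Rightarrow> 'a) \<Rightarrow> bool" where
  "multi_A_linear2 act F \<longleftrightarrow>
     (\<forall>x x' y. F (x + x') y = F x y + F x' y) \<and>
     (\<forall>x y y'. F x (y + y') = F x y + F x y') \<and>
     (\<forall>x y \<alpha> a. F (act (scaleC \<alpha> x) a) y = scaleC (cnj \<alpha>) (cstar a * F x y)) \<and>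
     (\<forall>x y \<alpha> a. F x (act (scaleC \<alpha> y) a) = scaleC \<alpha> (F x y * a))"

definition bounded2 :: "('x::real_normed_vector \<Rightarrow> 'x \<Rightarrow> 'a::real_normed_vector) \<Rightarrow> bool" where
  "bounded2 F \<longleftrightarrow> (\<exists>M. \<forall>x y. norm (F x y) \<le> M * norm x * norm y)"

definition invertible_el :: "'a::ring_1 \<Rightarrow> bool" where
  "invertible_el a \<longleftrightarrow> (\<exists>b. a * b = 1 \<and> b * a = 1)"

definition strong2 :: "('x \<Rightarrow> 'x \<Rightarrow> 'a::ring_1) \<Rightarrow> bool" where
  "strong2 F \<longleftrightarrow> (\<exists>w. invertible_el (F w w))"

end

theory Submission
  imports Defs
begin

lemma comm_from_total:
  fixes a b :: "'a::cstar_algebra_1"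
  assumes "mult_functionals_total TYPE('a)"
  shows "a * b = b * a"
proof -
  have "\<forall>\<phi>. mult_functional \<phi> \<longrightarrow> \<phi> (a * b - b * a) = 0"
  proof (intro allI impI)
    fix \<phi> :: "'a \<Rightarrow> complex" assume m: "mult_functional \<phi>"
    have add: "\<And>u v. \<phi> (u + v) = \<phi> u + \<phi> v" and mul: "\<And>u v. \<phi> (u * v) = \<phi> u * \<phi> v"
      using m unfolding mult_functional_def by auto
    have "\<phi> (a * b - b * a) + \<phi> (b * a) = \<phi> (a * b)"
      using add[of "a * b - b * a" "b * a"] by simp
    then show "\<phi> (a * b - b * a) = 0" using mul[of a b] mul[of b a] by (simp add: algebra_simps)
  qed
  then have "a * b - b * a = 0" using assms unfolding mult_functionals_total_def by blast
  then show ?thesis by simp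
qed

lemma mal_rules:
  fixes act :: "'x::cvector \<Rightarrow> 'a::cstar_algebra_1 \<Rightarrow> 'x"
  assumes "multi_A_linear2 act F"
  shows "F (act x a) y = cstar a * F x y"
    and "F x (act y a) = F x y * a"
    and "F (x - x') y = F x y - F x' y"
    and "F x (y - y') = F x y - F x y'"
proof -
  have A1: "\<And>x x' y. F (x + x') y = F x y + F x' y"
    and A2: "\<And>x y y'. F x (y + y') = F x y + F x y'"
    and B1: "\<And>x y \<alpha> a. F (act (scaleC \<alpha> x) a) y = scaleC (cnj \<alpha>) (cstar a * F x y)"
    and B2: "\<And>x y \<alpha> a. F x (act (scaleC \<alpha> y) a) = scaleC \<alpha> (F x y * a)"
    using assms unfolding multi_A_linear2_def by blast+
  show "F (act x a) y = cstar a * F x y" using B1[of 1 x a y] by (simp add: scaleC_one)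
  show "F x (act y a) = F x y * a" using B2[of x 1 y a] by (simp add: scaleC_one)
  show "F (x - x') y = F x y - F x' y" using A1[of "x - x'" x' y] by (simp add: algebra_simps)
  show "F x (y - y') = F x y - F x y'" using A2[of x "y - y'" y'] by (simp add: algebra_simps)
qed

theorem theorem3p5:
  fixes act :: "'x::cnormed_vector \<Rightarrow> 'a::cstar_algebra_1 \<Rightarrow> 'x"
    and E F :: "'x \<Rightarrow> 'x \<Rightarrow> 'a"
  assumes "mult_functionals_total TYPE('a)"
    and "right_module act"
    and "multi_A_linear2 act E"
    and "multi_A_linear2 act F"
    and "bounded2 E"
    and "strong2 E"
  shows "((\<forall>x y. E x y = 0 \<longrightarrow> F x y = 0) \<longleftrightarrow> (\<exists>c. \<forall>x y. F x y = c * E x y))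
    \<and> ((\<forall>x y. E x y = 0 \<longrightarrow> F x y = 0) \<longrightarrow> bounded2 F)
    \<and> ((\<exists>c. \<forall>x y. F x y = c * E x y) \<longrightarrow> bounded2 F)"
proof -
  have comm: "\<And>a b :: 'a. a * b = b * a" using comm_from_total[OF assms(1)] by blast
  note E = mal_rules[OF assms(3)]
  note F = mal_rules[OF assms(4)]
  have bnd: "bounded2 F" if ex: "\<exists>c. \<forall>x y. F x y = c * E x y"
  proof -
    obtain c where c: "\<And>x y. F x y = c * E x y" using ex by blast
    obtain M where M: "\<And>x y. norm (E x y) \<le> M * norm x * norm y"
      using assms(5) unfolding bounded2_def by blast
    have "norm (F x y) \<le> (norm c * M) * norm x * norm y" for x y
    proof -
      have "norm (F x y) \<le> norm c * norm (E x y)" unfolding c by (rule norm_mult_ineq)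
      also have "\<dots> \<le> norm c * (M * norm x * norm y)" by (rule mult_left_mono[OF M]) simp
      finally show ?thesis by (simp add: mult.assoc)
    qed
    then show ?thesis unfolding bounded2_def by blast
  qed
  have main: "\<exists>c. \<forall>x y. F x y = c * E x y" if H: "\<forall>x y. E x y = 0 \<longrightarrow> F x y = 0"
  proof -
    obtain w b where eb: "E w w * b = 1" "b * E w w = 1"
      using assms(6) unfolding strong2_def invertible_el_def by blast
    define e where "e = E w w"
    define c where "c = F w w * b"
    have star1: "F x y * E x w = F x w * E x y" for x y
    proof -
      have "E x (act y (E x w) - act w (E x y)) = 0" using E by (simp add: comm)
      then have "F x (act y (E x w) - act w (E x y)) = 0" using H by blast
      then show ?thesis using F by simp
    qed
    have star2: "E w y * F x y = E x y * F w y" for x y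
    proof -
      have "E (act x (cstar (E w y)) - act w (cstar (E x y))) y = 0"
        using E by (simp add: comm cstar_cstar)
      then have "F (act x (cstar (E w y)) - act w (cstar (E x y))) y = 0" using H by blast
      then show ?thesis using F by (simp add: cstar_cstar)
    qed
    have b: "F w y = c * E w y" for y
    proof -
      have "F w y = F w y * (e * b)" using eb unfolding e_def by simp
      also have "\<dots> = (F w y * E w w) * b" unfolding e_def by (simp add: mult.assoc)
      also have "\<dots> = F w w * E w y * b" using star1[of w y] by simp
      finally show ?thesis unfolding c_def by (metis comm mult.assoc)
    qed
    have a: "F x w = c * E x w" for x
    proof -
      have "F x w = (b * e) * F x w" using eb unfolding e_def by simp
      also have "\<dots> = b * (E w w * F x w)" unfolding e_def by (simp add: mult.assoc)
      also have "\<dots> = b * (E x w * F w w)" by (simp only: star2)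
      finally show ?thesis unfolding c_def by (metis comm mult.assoc)
    qed
    have "F x y = c * E x y" for x y
    proof -
      define s where "s = b * (1 - E w y)"
      define y' where "y' = y - act w (- s)"
      have "E w y' = E w y - E w w * (- s)" unfolding y'_def using E by simp
      also have "\<dots> = E w y + (E w w * b) * (1 - E w y)" unfolding s_def by (simp add: mult.assoc)
      also have "\<dots> = 1" using eb by simp
      finally have Ey': "E w y' = 1" .
      have Fy': "F x y' = c * E x y'"
        using star2[where x=x and y=y'] b[of y'] Ey' by (simp add: comm)
      have "F x y = F x y' + F x (act w (- s))" unfolding y'_def using F by simp
      also have "\<dots> = c * E x y' + c * E x w * (- s)" using Fy' F a by simp
      also have "\<dots> = c * E x y"
      proof -
        have "E x y' = E x y - E x w * (- s)" unfolding y'_def by (simp only: E(4) E(2))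
        then show ?thesis by (simp add: algebra_simps)
      qed
      finally show ?thesis .
    qed
    then show ?thesis by blast
  qed
  have conv: "\<forall>x y. E x y = 0 \<longrightarrow> F x y = 0" if "\<exists>c. \<forall>x y. F x y = c * E x y"
    using that by auto
  show ?thesis using main conv bnd by blast
qed

end
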